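(* Let $G$ be a finite abelian group, let $S\subseteq G$ be spectral, and let $H\le G$ be a subgroup such that $S$ determines every direction in $H$, i.e. for every nonzero $h\in H$ there is $w\in S-S$ with $w\sim h$. Then $|H|$ divides $|S|$.
   Context: For a finite abelian group $G=\bigoplus_i\mathbb{Z}_{n_i}$ with exponent $M$, let $\langle x,y\rangle=\sum_i\frac{M}{n_i}x_iy_i\in\mathbb{Z}_M$ and $\chi_g(x)=e^{2\pi i\langle x,g\rangle/M}$ for $g\in G$; $g\mapsto\chi_g$ identifies $G$ with its dual group. For a set $S$, $\chi(S)=\sum_{s\in S}\chi(s)$. A set $S\subseteq G$ is spectral if there is $\Lambda\subseteq G$ with $|\Lambda|=|S|$ and $\chi_{\lambda-\lambda'}(S)=0$ for all distinct $\lambda,\lambda'\in\Lambda$. For $v,w\in G$ write $v\sim w$ if $v$ and $w$ generate the same cyclic subgroup of $G$; the equivalence classes are called directions, and $S$ determines the direction of $v$ if some $w\in S-S$ satisfies $w\sim v$. *)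

theory Defs
  imports Complex_Main
begin

text \<open>A finite abelian group G = Z_{n_0} (+) ... (+) Z_{n_{k-1}} is given by the list
  ns = [n_0,...,n_{k-1}] of moduli (each n_i >= 1); elements are integer lists x of
  length k with 0 <= x_i < n_i; addition is coordinatewise modulo n_i.\<close>

definition grp :: "nat list \<Rightarrow> int list set" where
  "grp ns = {x. length x = length ns \<and> (\<forall>i<length ns. 0 \<le> x!i \<and> x!i < int (ns!i))}"

definition gzero :: "nat list \<Rightarrow> int list" where
  "gzero ns = replicate (length ns) 0"

definition gadd :: "nat list \<Rightarrow> int list \<Rightarrow> int list \<Rightarrow> int list" where
  "gadd ns x y = map (\<lambda>i. (x!i + y!i) mod int (ns!i)) [0..<length ns]"

definition gneg :: "nat list \<Rightarrow> int list \<Rightarrow> int list" where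
  "gneg ns x = map (\<lambda>i. (- x!i) mod int (ns!i)) [0..<length ns]"

definition gsub :: "nat list \<Rightarrow> int list \<Rightarrow> int list \<Rightarrow> int list" where
  "gsub ns x y = map (\<lambda>i. (x!i - y!i) mod int (ns!i)) [0..<length ns]"

definition gsmul :: "nat list \<Rightarrow> int \<Rightarrow> int list \<Rightarrow> int list" where
  "gsmul ns k x = map (\<lambda>i. (k * x!i) mod int (ns!i)) [0..<length ns]"

definition expo :: "nat list \<Rightarrow> nat" where
  "expo ns = Lcm (set ns)"

definition pairing :: "nat list \<Rightarrow> int list \<Rightarrow> int list \<Rightarrow> int" where
  "pairing ns x y = (\<Sum>i<length ns. int (expo ns div ns!i) * x!i * y!i) mod int (expo ns)"

definition chi :: "nat list \<Rightarrow> int list \<Rightarrow> int list \<Rightarrow> complex" where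
  "chi ns g x = exp (2 * pi * \<i> * of_int (pairing ns x g) / of_nat (expo ns))"

definition chi_set :: "nat list \<Rightarrow> int list \<Rightarrow> int list set \<Rightarrow> complex" where
  "chi_set ns g S = (\<Sum>s\<in>S. chi ns g s)"

definition spectral :: "nat list \<Rightarrow> int list set \<Rightarrow> bool" where
  "spectral ns S \<longleftrightarrow> (\<exists>\<Lambda>. \<Lambda> \<subseteq> grp ns \<and> card \<Lambda> = card S \<and>
     (\<forall>l\<in>\<Lambda>. \<forall>l'\<in>\<Lambda>. l \<noteq> l' \<longrightarrow> chi_set ns (gsub ns l l') S = 0))"

definition cyc :: "nat list \<Rightarrow> int list \<Rightarrow> int list set" where
  "cyc ns v = {gsmul ns k v | k. True}"

definition dir_equiv :: "nat list \<Rightarrow> int list \<Rightarrow> int list \<Rightarrow> bool" where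
  "dir_equiv ns v w \<longleftrightarrow> cyc ns v = cyc ns w"

definition diffset :: "nat list \<Rightarrow> int list set \<Rightarrow> int list set" where
  "diffset ns S = {gsub ns a b | a b. a \<in> S \<and> b \<in> S}"

definition is_subgroup :: "nat list \<Rightarrow> int list set \<Rightarrow> bool" where
  "is_subgroup ns H \<longleftrightarrow> H \<subseteq> grp ns \<and> gzero ns \<in> H \<and>
     (\<forall>x\<in>H. \<forall>y\<in>H. gadd ns x y \<in> H) \<and> (\<forall>x\<in>H. gneg ns x \<in> H)"

end

theory Submission
  imports Defs "HOL-Computational_Algebra.Polynomial_Factorial" "HOL-Computational_Algebra.Primes"
begin


definition ev :: "complex \<Rightarrow> int poly \<Rightarrow> complex" where
  "ev z q = poly (map_poly of_int q) z"

lemma mpi_add: "map_poly (of_int::int\<Rightarrow>complex) (p + q) = map_poly of_int p + map_poly of_int q"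
  by (rule poly_eqI) (simp add: coeff_map_poly)
lemma mpi_diff: "map_poly (of_int::int\<Rightarrow>complex) (p - q) = map_poly of_int p - map_poly of_int q"
  by (rule poly_eqI) (simp add: coeff_map_poly)
lemma mpi_mult: "map_poly (of_int::int\<Rightarrow>complex) (p * q) = map_poly of_int p * map_poly of_int q"
  by (rule poly_eqI) (simp add: coeff_map_poly coeff_mult)

lemma ev_add [simp]: "ev z (p + q) = ev z p + ev z q"
  by (simp add: ev_def mpi_add)
lemma ev_diff [simp]: "ev z (p - q) = ev z p - ev z q"
  by (simp add: ev_def mpi_diff)
lemma ev_mult [simp]: "ev z (p * q) = ev z p * ev z q"
  by (simp add: ev_def mpi_mult)
lemma ev_0 [simp]: "ev z 0 = 0" by (simp add: ev_def)
lemma ev_1 [simp]: "ev z 1 = 1" by (simp add: ev_def)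
lemma ev_power [simp]: "ev z (p ^ n) = ev z p ^ n"
  by (induction n) simp_all
lemma ev_const [simp]: "ev z [:c:] = of_int c"
  by (simp add: ev_def map_poly_pCons)
lemma ev_pCons [simp]: "ev z (pCons c p) = of_int c + z * ev z p"
  by (simp add: ev_def map_poly_pCons)
lemma ev_monom [simp]: "ev z (monom c n) = of_int c * z ^ n"
  by (simp add: ev_def map_poly_monom poly_monom)
lemma ev_smult [simp]: "ev z (smult c p) = of_int c * ev z p"
  by (simp add: ev_def map_poly_smult)

lemma ev_of_nat [simp]: "ev z (of_nat n) = of_nat n"
  by (simp add: of_nat_poly)

lemma binom_prime:
  fixes x y :: "'a::comm_ring_1"
  assumes "prime p"
  shows "\<exists>c. (x + y) ^ p = x ^ p + y ^ p + of_nat p * c"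
proof -
  have p1: "p > 1" using assms prime_gt_1_nat by blast
  define c where "c = (\<Sum>k\<in>{1..p-1}. of_nat ((p choose k) div p) * x ^ k * y ^ (p - k) :: 'a)"
  have "(x + y) ^ p = (\<Sum>k\<le>p. of_nat (p choose k) * x ^ k * y ^ (p - k))"
    by (rule binomial_ring)
  also have "{..p} = insert 0 (insert p {1..p-1})" using p1 by auto
  also have "(\<Sum>k\<in>insert 0 (insert p {1..p-1}). of_nat (p choose k) * x ^ k * y ^ (p - k))
      = y ^ p + (x ^ p + (\<Sum>k\<in>{1..p-1}. of_nat (p choose k) * x ^ k * y ^ (p - k)))"
    using p1 by (simp add: sum.insert)
  also have "(\<Sum>k\<in>{1..p-1}. of_nat (p choose k) * x ^ k * y ^ (p - k)) = of_nat p * c"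
    unfolding c_def sum_distrib_left
  proof (rule sum.cong)
    fix k assume k: "k \<in> {1..p-1}"
    then have "p dvd (p choose k)" using assms p1 by (intro dvd_choose_prime) auto
    then have "of_nat (p choose k) = (of_nat p * of_nat ((p choose k) div p) :: 'a)"
      by (metis dvd_mult_div_cancel of_nat_mult)
    then show "of_nat (p choose k) * x ^ k * y ^ (p - k) =
         of_nat p * (of_nat ((p choose k) div p) * x ^ k * y ^ (p - k))"
      by (simp add: mult.assoc)
  qed simp
  finally show ?thesis by (auto simp: algebra_simps)
qed

lemma fermat_nat_aux:
  assumes "prime p"
  shows "int p dvd (int n) ^ p - int n"
proof (induction n)
  case 0
  then show ?case using assms prime_gt_1_nat by (simp add: power_0_left)
next
  case (Suc n)
  obtain c :: int where c: "(int n + 1) ^ p = int n ^ p + 1 ^ p + of_nat p * c"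
    using binom_prime[OF assms] by blast
  have "(int n + 1) ^ p - (int n + 1) = (int n ^ p - int n) + int p * c"
    using c by simp
  then have e: "int (Suc n) ^ p - int (Suc n) = (int n ^ p - int n) + int p * c"
    by (simp only: of_nat_Suc add.commute)
  show ?case unfolding e by (intro dvd_add Suc.IH) simp
qed

lemma fermat_int:
  assumes "prime p"
  shows "int p dvd a ^ p - a"
proof -
  have pp: "int p > 0" using assms by (simp add: prime_gt_0_nat)
  define b where "b = a mod int p"
  have b0: "b \<ge> 0" using pp b_def by simp
  have "int p dvd (int (nat b)) ^ p - int (nat b)" by (rule fermat_nat_aux[OF assms])
  then have "int p dvd b ^ p - b" using b0 by simp
  then have "(b ^ p - b) mod int p = 0" by simp
  moreover have "(a ^ p - a) mod int p = (b ^ p - b) mod int p"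
  proof (rule mod_diff_cong)
    show "a ^ p mod int p = b ^ p mod int p" unfolding b_def by (simp add: power_mod)
    show "a mod int p = b mod int p" unfolding b_def by simp
  qed
  ultimately show ?thesis by (simp add: dvd_eq_mod_eq_0)
qed

lemma frobenius:
  assumes "prime p"
  shows "\<exists>u. \<forall>z. ev z g ^ p = ev (z ^ p) g + of_nat p * ev z u"
proof (induction g)
  case 0
  then show ?case using assms prime_gt_1_nat by (intro exI[of _ 0]) (simp add: power_0_left)
next
  case (pCons a g)
  then obtain u' where u': "\<And>z. ev z g ^ p = ev (z ^ p) g + of_nat p * ev z u'" by blast
  obtain c :: "int poly" where c: "([:a:] + pCons 0 g) ^ p = [:a:] ^ p + (pCons 0 g) ^ p + of_nat p * c"
    using binom_prime[OF assms] by blast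
  obtain t where t: "a ^ p - a = int p * t" using fermat_int[OF assms, of a] by (meson dvdE)
  have eq: "pCons a g = [:a:] + pCons 0 g" by simp
  show ?case
  proof (intro exI allI)
    fix z :: complex
    have "ev z (pCons a g) ^ p = ev z ((pCons a g) ^ p)" by simp
    also have "\<dots> = ev z ([:a:] ^ p) + ev z (pCons 0 g ^ p) + of_nat p * ev z c"
      by (subst eq, subst c) simp
    also have "ev z ([:a:] ^ p) = of_int (a ^ p)" by simp
    also have "of_int (a ^ p) = (of_int a + of_nat p * of_int t :: complex)"
      using t by (metis add.commute diff_add_cancel of_int_add of_int_mult of_int_of_nat_eq)
    also have "ev z (pCons 0 g ^ p) = z ^ p * (ev (z ^ p) g + of_nat p * ev z u')"
      by (simp add: power_mult_distrib u')
    finally show "ev z (pCons a g) ^ p = ev (z ^ p) (pCons a g) + of_nat p * ev z ([:t:] + monom 1 p * u' + c)"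
      by (simp add: algebra_simps)
  qed
qed



lemma ev_sum [simp]: "ev z (sum f A) = (\<Sum>x\<in>A. ev z (f x))"
  by (induction A rule: infinite_finite_induct) simp_all

lemma pp_content1: "content f = 1 \<Longrightarrow> primitive_part f = (f :: int poly)"
  by (metis content_times_primitive_part smult_1_left)

lemma gauss_dvd:
  fixes f q :: "int poly"
  assumes "content f = 1" "c \<noteq> 0" "f dvd smult c q"
  shows "f dvd q"
proof -
  obtain s where s: "smult c q = f * s" using assms(3) by (elim dvdE)
  have "primitive_part (smult c q) = primitive_part f * primitive_part s"
    by (simp add: s primitive_part_mult)
  then have e1: "smult (unit_factor c) (primitive_part q) = f * primitive_part s"
    using assms(1) by (simp add: primitive_part_smult pp_content1)
  have uu: "unit_factor c * unit_factor c = 1" using assms(2)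
    by (simp add: sgn_if)
  have "primitive_part q = smult (unit_factor c) (smult (unit_factor c) (primitive_part q))"
    using uu by simp
  also have "\<dots> = smult (unit_factor c) (f * primitive_part s)"
    by (simp only: e1)
  also have "\<dots> = f * smult (unit_factor c) (primitive_part s)"
    by simp
  finally have "f dvd primitive_part q" by (rule dvdI)
  also have "primitive_part q dvd q"
    by (metis content_times_primitive_part dvd_triv_right mult.commute smult_dvd_cancel dvd_refl dvd_smult)
  finally show ?thesis .
qed

lemma minpoly:
  assumes "D > 0" "\<xi> ^ D = 1"
  shows "\<exists>f. f \<noteq> 0 \<and> ev \<xi> f = 0 \<and> (\<forall>q. ev \<xi> q = 0 \<longrightarrow> f dvd q)"
proof -
  define P :: "int poly" where "P = monom 1 D - 1"
  have "coeff P D = 1" using assms(1) by (simp add: P_def)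
  then have P0: "P \<noteq> 0" by auto
  have evP: "ev \<xi> P = 0" using assms(2) by (simp add: P_def)
  define V where "V = {q. q \<noteq> 0 \<and> ev \<xi> q = 0}"
  have ex: "\<exists>n. \<exists>q\<in>V. degree q = n" using P0 evP unfolding V_def by blast
  define d where "d = (LEAST n. \<exists>q\<in>V. degree q = n)"
  obtain f0 where f0: "f0 \<in> V" "degree f0 = d"
    using LeastI_ex[OF ex] unfolding d_def by blast
  have dmin: "d \<le> degree q" if "q \<in> V" for q
    unfolding d_def by (rule Least_le) (use that in blast)
  define f where "f = primitive_part f0"
  have f0nz: "f0 \<noteq> 0" and evf0: "ev \<xi> f0 = 0" using f0 by (auto simp: V_def)
  have fnz: "f \<noteq> 0" using f0nz by (simp add: f_def)
  have cf: "content f = 1" using f0nz by (simp add: f_def)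
  have "ev \<xi> f0 = of_int (content f0) * ev \<xi> f"
    by (metis content_times_primitive_part ev_smult f_def)
  then have evf: "ev \<xi> f = 0" using evf0 f0nz by simp
  have degf: "degree f = d" using f0 by (simp add: f_def)
  have "f dvd q" if q: "ev \<xi> q = 0" for q
  proof -
    obtain s r where sr: "pseudo_divmod q f = (s, r)" by (cases "pseudo_divmod q f") auto
    define c where "c = coeff f (degree f) ^ (Suc (degree q) - degree f)"
    have eq: "smult c q = f * s + r" and rd: "r = 0 \<or> degree r < degree f"
      using pseudo_divmod[OF fnz sr] unfolding c_def by auto
    have "ev \<xi> r = 0"
    proof -
      have "ev \<xi> (smult c q) = ev \<xi> (f * s + r)" by (simp only: eq)
      then show ?thesis using q evf by simp
    qed
    have r0: "r = 0"
    proof (rule ccontr)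
      assume "r \<noteq> 0"
      then have "r \<in> V" using \<open>ev \<xi> r = 0\<close> by (simp add: V_def)
      then have "d \<le> degree r" by (rule dmin)
      with rd \<open>r \<noteq> 0\<close> degf show False by simp
    qed
    have c0: "c \<noteq> 0" using fnz by (simp add: c_def)
    have "f dvd smult c q" using eq r0 by simp
    then show ?thesis by (rule gauss_dvd[OF cf c0])
  qed
  then show ?thesis using fnz evf by blast
qed



lemma galois_prime:
  assumes p: "prime p" and pD: "\<not> p dvd D" and D: "D > 0" and xi: "\<xi> ^ D = 1"
    and q: "ev \<xi> q = 0"
  shows "ev (\<xi> ^ p) q = 0"
proof -
  define \<eta> where "\<eta> = \<xi> ^ p"
  have eta: "\<eta> ^ D = 1" unfolding \<eta>_def by (metis mult.commute power_mult power_one xi)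
  obtain f where fnz: "f \<noteq> 0" and evf: "ev \<xi> f = 0" and fdvd: "\<And>q. ev \<xi> q = 0 \<Longrightarrow> f dvd q"
    using minpoly[OF D xi] by blast
  obtain g where gnz: "g \<noteq> 0" and evg: "ev \<eta> g = 0" and gdvd: "\<And>q. ev \<eta> q = 0 \<Longrightarrow> g dvd q"
    using minpoly[OF D eta] by blast
  have fe: "ev \<eta> f = 0"
  proof (rule ccontr)
    assume nz: "ev \<eta> f \<noteq> 0"
    define P :: "int poly" where "P = monom 1 D - 1"
    have evP: "ev z P = z ^ D - 1" for z by (simp add: P_def)
    have "f dvd P" using evP[of \<xi>] xi by (intro fdvd) simp
    then obtain h1 where h1: "P = f * h1" by (elim dvdE)
    have "ev \<eta> f * ev \<eta> h1 = 0" using evP[of \<eta>] eta by (simp flip: ev_mult h1)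
    then have "ev \<eta> h1 = 0" using nz by simp
    then obtain h where h: "h1 = g * h" using gdvd by (meson dvdE)
    have Pfgh: "P = f * (g * h)" using h1 h by simp
    have "pderiv P = monom (int D) (D - 1)" by (simp add: P_def pderiv_monom pderiv_diff)
    also have "pderiv P = f * pderiv (g * h) + (g * h) * pderiv f"
      unfolding Pfgh by (rule pderiv_mult)
    finally have "ev \<xi> (monom (int D) (D - 1)) = ev \<xi> (f * pderiv (g * h) + (g * h) * pderiv f)"
      by simp
    then have der: "of_nat D * \<xi> ^ (D - 1) = ev \<xi> g * ev \<xi> h * ev \<xi> (pderiv f)"
      using evf by simp
    obtain u where u: "\<And>z. ev z g ^ p = ev (z ^ p) g + of_nat p * ev z u"
      using frobenius[OF p] by blast
    have gp: "ev \<xi> g ^ p = of_nat p * ev \<xi> u" using u[of \<xi>] evg unfolding \<eta>_def by simp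
    define A where "A = u * h ^ p * (pderiv f) ^ p * monom 1 p"
    have "(of_nat D * \<xi> ^ (D - 1)) ^ p * \<xi> ^ p = of_nat p * ev \<xi> A"
      unfolding der A_def by (simp add: power_mult_distrib gp algebra_simps)
    moreover have "(of_nat D * \<xi> ^ (D - 1)) ^ p * \<xi> ^ p = (of_nat D) ^ p"
    proof -
      have "(of_nat D * \<xi> ^ (D - 1)) ^ p * \<xi> ^ p = of_nat D ^ p * (\<xi> ^ (D - 1) * \<xi>) ^ p"
        by (simp add: power_mult_distrib)
      also have "\<xi> ^ (D - 1) * \<xi> = \<xi> ^ D" using D by (metis Suc_diff_1 power_Suc2)
      finally show ?thesis using xi by simp
    qed
    ultimately have key: "(of_nat D :: complex) ^ p = of_nat p * ev \<xi> A" by simp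
    obtain s r where sr: "pseudo_divmod A f = (s, r)" by (cases "pseudo_divmod A f") auto
    define e where "e = Suc (degree A) - degree f"
    define c where "c = coeff f (degree f) ^ e"
    have eq: "smult c A = f * s + r" and rd: "r = 0 \<or> degree r < degree f"
      using pseudo_divmod[OF fnz sr] unfolding c_def e_def by auto
    have evr: "ev \<xi> r = of_int c * ev \<xi> A"
    proof -
      have "ev \<xi> (smult c A) = ev \<xi> (f * s + r)" by (simp only: eq)
      then show ?thesis using evf by simp
    qed
    have cD: "coeff P D = 1" using D by (simp add: P_def)
    have "degree P \<le> D" unfolding P_def by (intro degree_diff_le) (simp_all add: degree_monom_le)
    moreover have "D \<le> degree P" using cD by (intro le_degree) simp
    ultimately have "lead_coeff P = 1" using cD by simp
    then have "lead_coeff f * lead_coeff h1 = 1" using h1 by (simp add: lead_coeff_mult)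
    then have cc: "c * coeff h1 (degree h1) ^ e = 1" unfolding c_def by (metis power_mult_distrib power_one)
    define Q where "Q = smult (int p) r - [:c * int D ^ p:]"
    have evQ: "ev \<xi> Q = 0"
    proof -
      have "ev \<xi> Q = of_nat p * ev \<xi> r - of_int c * of_nat D ^ p" by (simp add: Q_def)
      also have "\<dots> = 0" using key evr by (simp add: algebra_simps)
      finally show ?thesis .
    qed
    have degf: "degree f > 0"
    proof (rule ccontr)
      assume "\<not> degree f > 0"
      then have "f = [:coeff f 0:]" using degree_0_id[of f] by simp
      then have "ev \<xi> f = of_int (coeff f 0)" by (metis ev_const)
      then show False using evf fnz \<open>f = [:coeff f 0:]\<close> by auto
    qed
    have Q0: "Q \<noteq> 0"
    proof
      assume "Q = 0"
      then have "coeff Q 0 = 0" by simp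
      then have "int p * coeff r 0 = c * int D ^ p" by (simp add: Q_def)
      then have "int p dvd c * int D ^ p" by (metis dvd_triv_left)
      then have "int p dvd coeff h1 (degree h1) ^ e * (c * int D ^ p)" by simp
      also have "coeff h1 (degree h1) ^ e * (c * int D ^ p) = int (D ^ p)" using cc by (simp add: algebra_simps)
      finally have "p dvd D ^ p" by presburger
      then have "p dvd D" using p prime_dvd_power by blast
      then show False using pD by simp
    qed
    have "degree Q < degree f"
      unfolding Q_def using rd degf
      by (intro degree_diff_less) (auto intro: le_less_trans[OF degree_smult_le])
    moreover have "degree f \<le> degree Q" using fdvd[OF evQ] Q0 by (rule dvd_imp_degree_le)
    ultimately show False by simp
  qed
  obtain t where "q = f * t" using fdvd[OF q] by (elim dvdE)
  then show ?thesis using fe unfolding \<eta>_def by simp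
qed

lemma galois_nat:
  assumes "D > 0" "coprime k D" "k > 0"
  shows "\<xi> ^ D = 1 \<Longrightarrow> ev \<xi> q = 0 \<Longrightarrow> ev (\<xi> ^ k) q = 0"
  using assms(2,3)
proof (induction k arbitrary: \<xi> rule: less_induct)
  case (less k)
  show ?case
  proof (cases "k = 1")
    case True then show ?thesis using less by simp
  next
    case False
    obtain p where p: "prime p" "p dvd k" using False prime_factor_nat by blast
    then obtain k' where k': "k = p * k'" by (elim dvdE)
    have k'0: "k' > 0" using less.prems k' by (simp add: gr0I)
    have "k' < k" using k' p k'0 prime_gt_1_nat[OF p(1)] by simp
    have cop: "coprime k' D" using less.prems k' by simp
    have "\<not> p dvd D" using less.prems p
      by (metis coprime_common_divisor_nat not_prime_1)
    then have e1: "ev (\<xi> ^ p) q = 0" by (intro galois_prime[OF p(1) _ assms(1) less.prems(1,2)])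
    have e2: "(\<xi> ^ p) ^ D = 1" using less.prems(1) by (metis mult.commute power_mult power_one)
    have "ev ((\<xi> ^ p) ^ k') q = 0" by (rule less.IH[OF \<open>k' < k\<close> e2 e1 cop k'0])
    then show ?thesis using k' by (simp add: power_mult)
  qed
qed

lemma galois_sum:
  fixes \<xi> :: complex
  assumes "D > 0" "coprime k D" "k > 0" "\<xi> ^ D = 1"
    and "(\<Sum>j\<in>J. \<xi> ^ b j) = 0"
  shows "(\<Sum>j\<in>J. \<xi> ^ (k * b j)) = 0"
proof -
  define q :: "int poly" where "q = (\<Sum>j\<in>J. monom 1 (b j))"
  have "ev \<xi> q = 0" using assms(5) by (simp add: q_def)
  then have "ev (\<xi> ^ k) q = 0" by (rule galois_nat[OF assms(1-3) assms(4)])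
  then show ?thesis by (simp add: q_def power_mult)
qed



definition ee :: "nat \<Rightarrow> int \<Rightarrow> complex" where
  "ee M a = exp (2 * pi * \<i> * of_int a / of_nat M)"

lemma chi_ee: "chi ns g x = ee (expo ns) (pairing ns x g)"
  unfolding chi_def ee_def by simp

lemma ee_add: "ee M (a + b) = ee M a * ee M b"
  unfolding ee_def by (simp add: distrib_left add_divide_distrib exp_add)

lemma ee_0 [simp]: "ee M 0 = 1"
  unfolding ee_def by simp

lemma ee_nat: "ee M (int n) = ee M 1 ^ n"
proof -
  have "ee M (int n) = exp (of_nat n * (2 * pi * \<i> / of_nat M))"
    unfolding ee_def by (simp add: algebra_simps)
  also have "\<dots> = ee M 1 ^ n" unfolding exp_of_nat_mult ee_def by simp
  finally show ?thesis .
qed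

lemma ee_M: "M > 0 \<Longrightarrow> ee M (int M) = 1"
  unfolding ee_def by simp

lemma ee_neg: "ee M (- a) * ee M a = 1"
  using ee_add[of M "- a" a] by simp

lemma ee_Mmult: assumes "M > 0" shows "ee M (int M * t) = 1"
proof -
  have pos: "ee M (int M * int n) = 1" for n
  proof -
    have "ee M (int M * int n) = ee M (int (M * n))" by simp
    also have "\<dots> = (ee M 1 ^ M) ^ n" by (simp only: ee_nat power_mult)
    also have "\<dots> = 1" using ee_M[OF assms] by (simp add: ee_nat)
    finally show ?thesis .
  qed
  show ?thesis
  proof (cases "t \<ge> 0")
    case True
    define n where "n = nat t"
    have "t = int n" using True by (simp add: n_def)
    then show ?thesis using pos by simp
  next
    case False
    define n where "n = nat (- t)"
    have n: "t = - int n" using False by (simp add: n_def)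
    have "ee M (- (int M * int n)) * ee M (int M * int n) = 1" by (rule ee_neg)
    then show ?thesis using pos n by simp
  qed
qed

lemma ee_cong: assumes "M > 0" "int M dvd a - b" shows "ee M a = ee M b"
proof -
  obtain t where "a - b = int M * t" using assms(2) by (elim dvdE)
  then have "a = b + int M * t" by simp
  then show ?thesis using ee_Mmult[OF assms(1)] by (simp add: ee_add)
qed

lemma ee_mod: assumes "M > 0" shows "ee M (a mod int M) = ee M a"
  by (rule ee_cong[OF assms]) (metis mod_mod_trivial mod_eq_dvd_iff)

lemma ee_norm [simp]: "norm (ee M a) = 1"
  unfolding ee_def by simp

lemma ee_cnj: "cnj (ee M a) = ee M (- a)"
proof -
  have "ee M a * cnj (ee M a) = 1"
    by (metis complex_norm_square ee_norm of_real_1 power_one)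
  moreover have "ee M a * ee M (- a) = 1" using ee_neg by (simp add: mult.commute)
  ultimately show ?thesis
  proof -
    assume h1: "ee M a * cnj (ee M a) = 1" and h2: "ee M a * ee M (- a) = 1"
    have "cnj (ee M a) = cnj (ee M a) * (ee M a * ee M (- a))" using h2 by simp
    also have "\<dots> = (ee M a * cnj (ee M a)) * ee M (- a)" by (simp only: ac_simps)
    also have "\<dots> = ee M (- a)" using h1 by simp
    finally show ?thesis .
  qed
qed

lemma ee_scale: assumes "D > 0" "T > 0" shows "ee (D * T) (int T * b) = ee D b"
  unfolding ee_def using assms by (simp add: field_simps)



lemma swap4:
  fixes T :: "'a \<Rightarrow> 'a \<Rightarrow> 'b \<Rightarrow> 'b \<Rightarrow> complex"
  shows "(\<Sum>a\<in>A. \<Sum>a'\<in>A. \<Sum>b\<in>B. \<Sum>b'\<in>B. T a a' b b') =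
         (\<Sum>b\<in>B. \<Sum>b'\<in>B. \<Sum>a\<in>A. \<Sum>a'\<in>A. T a a' b b')"
proof -
  have "(\<Sum>a\<in>A. \<Sum>a'\<in>A. \<Sum>b\<in>B. \<Sum>b'\<in>B. T a a' b b') =
        (\<Sum>a\<in>A. \<Sum>b\<in>B. \<Sum>a'\<in>A. \<Sum>b'\<in>B. T a a' b b')"
    by (rule sum.cong[OF refl], rule sum.swap)
  also have "\<dots> = (\<Sum>a\<in>A. \<Sum>b\<in>B. \<Sum>b'\<in>B. \<Sum>a'\<in>A. T a a' b b')"
    by (rule sum.cong[OF refl], rule sum.cong[OF refl], rule sum.swap)
  also have "\<dots> = (\<Sum>b\<in>B. \<Sum>a\<in>A. \<Sum>b'\<in>B. \<Sum>a'\<in>A. T a a' b b')"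
    by (rule sum.swap)
  also have "\<dots> = (\<Sum>b\<in>B. \<Sum>b'\<in>B. \<Sum>a\<in>A. \<Sum>a'\<in>A. T a a' b b')"
    by (rule sum.cong[OF refl], rule sum.swap)
  finally show ?thesis .
qed

lemma sym_orth:
  fixes e :: "'a \<Rightarrow> 'b \<Rightarrow> complex"
  assumes fA: "finite A" and fB: "finite B" and card: "card A = card B"
    and norm1: "\<And>a b. a \<in> A \<Longrightarrow> b \<in> B \<Longrightarrow> e a b * cnj (e a b) = 1"
    and orth: "\<And>a a'. a \<in> A \<Longrightarrow> a' \<in> A \<Longrightarrow> a \<noteq> a' \<Longrightarrow> (\<Sum>b\<in>B. e a b * cnj (e a' b)) = 0"
    and bb: "b0 \<in> B" "b1 \<in> B" "b0 \<noteq> b1"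
  shows "(\<Sum>a\<in>A. e a b0 * cnj (e a b1)) = 0"
proof -
  define m where "m = card A"
  define F where "F a a' = (\<Sum>b\<in>B. e a b * cnj (e a' b))" for a a'
  define G where "G b b' = (\<Sum>a\<in>A. e a b * cnj (e a b'))" for b b'
  define T where "T a a' b b' = e a b * cnj (e a' b) * (cnj (e a b') * e a' b')" for a a' b b'
  have FF: "F a a' * cnj (F a a') = (\<Sum>b\<in>B. \<Sum>b'\<in>B. T a a' b b')" for a a'
    unfolding F_def T_def by (simp add: sum_product)
  have GG: "G b b' * cnj (G b b') = (\<Sum>a\<in>A. \<Sum>a'\<in>A. T a a' b b')" for b b'
    unfolding G_def T_def by (simp add: sum_product mult_ac) (subst sum.swap, simp add: mult_ac)
  have eq: "(\<Sum>a\<in>A. \<Sum>a'\<in>A. F a a' * cnj (F a a')) = (\<Sum>b\<in>B. \<Sum>b'\<in>B. G b b' * cnj (G b b'))"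
    unfolding FF GG by (rule swap4)
  have Faa: "F a a = of_nat m" if "a \<in> A" for a
    unfolding F_def m_def card using norm1[OF that] by simp
  have Gbb: "G b b = of_nat m" if "b \<in> B" for b
    unfolding G_def m_def using norm1[OF _ that] by simp
  have L: "(\<Sum>a\<in>A. \<Sum>a'\<in>A. F a a' * cnj (F a a')) = of_nat m * of_nat m * of_nat m"
  proof -
    have "(\<Sum>a'\<in>A. F a a' * cnj (F a a')) = of_nat m * of_nat m" if a: "a \<in> A" for a
    proof -
      have "(\<Sum>a'\<in>A. F a a' * cnj (F a a')) = F a a * cnj (F a a) + (\<Sum>a'\<in>A - {a}. F a a' * cnj (F a a'))"
        using fA a by (simp add: sum.remove)
      also have "(\<Sum>a'\<in>A - {a}. F a a' * cnj (F a a')) = 0"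
        using a orth unfolding F_def by (intro sum.neutral) auto
      finally show ?thesis using Faa[OF a] by simp
    qed
    then have "(\<Sum>a\<in>A. \<Sum>a'\<in>A. F a a' * cnj (F a a')) = (\<Sum>a\<in>A. of_nat m * of_nat m)"
      by (intro sum.cong) auto
    then show ?thesis by (simp add: m_def)
  qed
  define N where "N b b' = (norm (G b b'))^2" for b b'
  have GN: "G b b' * cnj (G b b') = of_real (N b b')" for b b'
    unfolding N_def by (simp only: complex_norm_square)
  have R: "(\<Sum>b\<in>B. \<Sum>b'\<in>B. G b b' * cnj (G b b')) =
     of_nat m * of_nat m * of_nat m + of_real (\<Sum>b\<in>B. \<Sum>b'\<in>B - {b}. N b b')"
  proof -
    have "(\<Sum>b'\<in>B. G b b' * cnj (G b b')) = of_nat m * of_nat m + of_real (\<Sum>b'\<in>B - {b}. N b b')"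
      if b: "b \<in> B" for b
    proof -
      have "(\<Sum>b'\<in>B. G b b' * cnj (G b b')) = G b b * cnj (G b b) + (\<Sum>b'\<in>B - {b}. G b b' * cnj (G b b'))"
        using fB b by (simp add: sum.remove)
      then show ?thesis using Gbb[OF b] by (simp add: GN)
    qed
    then have "(\<Sum>b\<in>B. \<Sum>b'\<in>B. G b b' * cnj (G b b')) =
        (\<Sum>b\<in>B. of_nat m * of_nat m + of_real (\<Sum>b'\<in>B - {b}. N b b'))"
      by (intro sum.cong) auto
    also have "\<dots> = of_nat m * of_nat m * of_nat m + of_real (\<Sum>b\<in>B. \<Sum>b'\<in>B - {b}. N b b')"
      by (simp add: sum.distrib m_def card)
    finally show ?thesis .
  qed
  have "of_real (\<Sum>b\<in>B. \<Sum>b'\<in>B - {b}. N b b') = (0::complex)"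
    using eq L R by simp
  then have S0: "(\<Sum>b\<in>B. \<Sum>b'\<in>B - {b}. N b b') = 0" by (simp only: of_real_eq_0_iff)
  have Nnn: "N b b' \<ge> 0" for b b' unfolding N_def by simp
  have "(\<Sum>b'\<in>B - {b0}. N b0 b') = 0"
    using S0 fB bb Nnn by (subst (asm) sum_nonneg_eq_0_iff) (auto intro: sum_nonneg)
  then have "N b0 b1 = 0"
    using fB bb Nnn by (subst (asm) sum_nonneg_eq_0_iff) auto
  then show ?thesis unfolding N_def G_def by simp
qed



definition R :: "nat list \<Rightarrow> int list \<Rightarrow> int list \<Rightarrow> int" where
  "R ns x y = (\<Sum>i<length ns. int (expo ns div ns!i) * x!i * y!i)"

locale grpctx =
  fixes ns :: "nat list"
  assumes pos: "\<forall>i<length ns. ns!i \<ge> 1"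
begin

lemma expo_pos: "expo ns > 0"
proof -
  have "0 \<notin> set ns" using pos by (auto simp: in_set_conv_nth)
  then have "Lcm (set ns) \<noteq> 0" by (metis Lcm_0_iff List.finite_set)
  then show ?thesis unfolding expo_def by (metis neq0_conv)
qed

lemma ns_dvd: "i < length ns \<Longrightarrow> ns!i dvd expo ns"
  unfolding expo_def by (rule dvd_Lcm) simp

lemma mult_back: "i < length ns \<Longrightarrow> int (expo ns div ns!i) * int (ns!i) = int (expo ns)"
  using ns_dvd by (metis dvd_div_mult_self of_nat_mult)

lemma chi_R: "chi ns g x = ee (expo ns) (R ns x g)"
  unfolding chi_ee pairing_def R_def by (rule ee_mod[OF expo_pos])

lemma R_sym: "R ns x y = R ns y x"
  unfolding R_def by (simp add: mult_ac)

lemma R_cong: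
  assumes "\<forall>i<length ns. int (ns!i) dvd u!i - f i"
  shows "int (expo ns) dvd R ns u z - (\<Sum>i<length ns. int (expo ns div ns!i) * f i * z!i)"
proof -
  have "R ns u z - (\<Sum>i<length ns. int (expo ns div ns!i) * f i * z!i) =
        (\<Sum>i<length ns. int (expo ns div ns!i) * (u!i - f i) * z!i)"
    unfolding R_def by (simp add: sum_subtractf[symmetric] algebra_simps)
  also have "int (expo ns) dvd \<dots>"
  proof (rule dvd_sum)
    fix i assume i: "i \<in> {..<length ns}"
    then obtain t where t: "u!i - f i = int (ns!i) * t" using assms by (meson dvdE lessThan_iff)
    have "int (expo ns div ns!i) * (u!i - f i) * z!i = (int (expo ns div ns!i) * int (ns!i)) * (t * z!i)"
      using t by (simp only: mult.assoc)
    also have "\<dots> = int (expo ns) * (t * z!i)" using mult_back[of i] i by simp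
    finally have eq: "int (expo ns div ns!i) * (u!i - f i) * z!i = int (expo ns) * (t * z!i)" .
    show "int (expo ns) dvd int (expo ns div ns!i) * (u!i - f i) * z!i"
      unfolding eq by (rule dvd_triv_left)
  qed
  finally show ?thesis .
qed

lemma mod_dvd_diff: "int n dvd (a mod int n) - a"
  by (metis mod_eq_dvd_iff mod_mod_trivial)

lemma R_gsub: "int (expo ns) dvd R ns (gsub ns x y) z - (R ns x z - R ns y z)"
proof -
  have "int (expo ns) dvd R ns (gsub ns x y) z - (\<Sum>i<length ns. int (expo ns div ns!i) * (x!i - y!i) * z!i)"
    by (rule R_cong) (simp add: gsub_def mod_dvd_diff)
  moreover have "(\<Sum>i<length ns. int (expo ns div ns!i) * (x!i - y!i) * z!i) = R ns x z - R ns y z"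
    unfolding R_def by (simp add: sum_subtractf[symmetric] algebra_simps)
  ultimately show ?thesis by simp
qed

lemma R_gadd: "int (expo ns) dvd R ns (gadd ns x y) z - (R ns x z + R ns y z)"
proof -
  have "int (expo ns) dvd R ns (gadd ns x y) z - (\<Sum>i<length ns. int (expo ns div ns!i) * (x!i + y!i) * z!i)"
    by (rule R_cong) (simp add: gadd_def mod_dvd_diff)
  moreover have "(\<Sum>i<length ns. int (expo ns div ns!i) * (x!i + y!i) * z!i) = R ns x z + R ns y z"
    unfolding R_def by (simp add: sum.distrib[symmetric] algebra_simps)
  ultimately show ?thesis by simp
qed

lemma R_gsmul: "int (expo ns) dvd R ns (gsmul ns k x) z - k * R ns x z"
proof -
  have "int (expo ns) dvd R ns (gsmul ns k x) z - (\<Sum>i<length ns. int (expo ns div ns!i) * (k * x!i) * z!i)"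
    by (rule R_cong) (simp add: gsmul_def mod_dvd_diff)
  moreover have "(\<Sum>i<length ns. int (expo ns div ns!i) * (k * x!i) * z!i) = k * R ns x z"
    unfolding R_def by (simp add: sum_distrib_left algebra_simps)
  ultimately show ?thesis by simp
qed

lemma R_gzero [simp]: "R ns (gzero ns) z = 0"
  unfolding R_def gzero_def by simp

lemma finite_grp: "finite (grp ns)"
proof -
  define A where "A = (\<Union>i<length ns. {0..<int (ns!i)})"
  have fA: "finite A" unfolding A_def by auto
  have "grp ns \<subseteq> {xs. set xs \<subseteq> A \<and> length xs = length ns}"
  proof
    fix x assume x: "x \<in> grp ns"
    have "set x \<subseteq> A"
    proof
      fix y assume "y \<in> set x"
      then obtain i where i: "i < length x" "y = x!i" by (auto simp: in_set_conv_nth)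
      then show "y \<in> A" using x unfolding grp_def A_def by auto
    qed
    then show "x \<in> {xs. set xs \<subseteq> A \<and> length xs = length ns}" using x by (simp add: grp_def)
  qed
  then show ?thesis using finite_lists_length_eq[OF fA] by (rule finite_subset)
qed

lemma gsub_self: "x \<in> grp ns \<Longrightarrow> gsub ns x x = gzero ns"
  unfolding gsub_def gzero_def by (intro nth_equalityI) auto

lemma gsmul_1: "x \<in> grp ns \<Longrightarrow> gsmul ns 1 x = x"
  unfolding gsmul_def grp_def by (intro nth_equalityI) auto

lemma gsmul_zero: "gsmul ns k (gzero ns) = gzero ns"
  unfolding gsmul_def gzero_def by (intro nth_equalityI) auto

lemma gadd_inj:
  assumes "x \<in> grp ns" "y \<in> grp ns" "z \<in> grp ns" "gadd ns x y = gadd ns x z"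
  shows "y = z"
proof (rule nth_equalityI)
  show "length y = length z" using assms by (simp add: grp_def)
  fix i assume "i < length y"
  then have i: "i < length ns" using assms by (simp add: grp_def)
  have "gadd ns x y ! i = gadd ns x z ! i" using assms(4) by simp
  then have "(x!i + y!i) mod int (ns!i) = (x!i + z!i) mod int (ns!i)" using i by (simp add: gadd_def)
  then have "((x!i + y!i) - x!i) mod int (ns!i) = ((x!i + z!i) - x!i) mod int (ns!i)"
    by (rule mod_diff_cong) simp
  then have "y!i mod int (ns!i) = z!i mod int (ns!i)" by simp
  moreover have "0 \<le> y!i" "y!i < int (ns!i)" "0 \<le> z!i" "z!i < int (ns!i)"
    using assms(2,3) i by (auto simp: grp_def)
  ultimately show "y!i = z!i" by simp
qed

end



lemma galois_E:
  fixes M :: nat and a :: "'x \<Rightarrow> int" and k k' :: int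
  assumes M: "M > 0" and fin: "finite L" and s0: "(\<Sum>l\<in>L. ee M (a l)) = 0"
    and per: "\<forall>l\<in>L. int M dvd (k * k' - 1) * a l"
  shows "(\<Sum>l\<in>L. ee M (k * a l)) = 0"
proof -
  define Dz where "Dz = gcd (int M) (k * k' - 1)"
  have Dz0: "Dz > 0" using M by (simp add: Dz_def)
  define D where "D = nat Dz"
  have DzD: "Dz = int D" and D0: "D > 0" using Dz0 by (simp_all add: D_def)
  have "Dz dvd int M" by (simp add: Dz_def)
  then have "D dvd M" using DzD by simp
  define T where "T = M div D"
  have MDT: "M = D * T" using \<open>D dvd M\<close> by (simp add: T_def)
  have T0: "T > 0" using M MDT by (simp add: gr0I)
  obtain u v where uv: "u * int M + v * (k * k' - 1) = Dz"
    using bezout_int[of "int M" "k * k' - 1"] unfolding Dz_def by blast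
  have Ta: "int T dvd a l" if l: "l \<in> L" for l
  proof -
    have "Dz * a l = (u * int M + v * (k * k' - 1)) * a l" using uv by simp
    also have "\<dots> = u * a l * int M + v * ((k * k' - 1) * a l)"
      by (simp add: algebra_simps)
    also have "int M dvd \<dots>" using per l by (intro dvd_add) (simp_all add: dvd_mult)
    finally have "Dz * int T dvd Dz * a l" using MDT DzD by simp
    then show ?thesis using Dz0 by simp
  qed
  define b where "b l = a l div int T" for l
  have ab: "a l = int T * b l" if "l \<in> L" for l
    using Ta[OF that] by (simp add: b_def)
  have copk: "coprime k Dz"
  proof (rule coprimeI)
    fix c assume c1: "c dvd k" and c2: "c dvd Dz"
    have "Dz dvd k * k' - 1" by (simp add: Dz_def)
    then have "c dvd k * k' - 1" using c2 by (rule dvd_trans[rotated])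
    moreover have "c dvd k * k'" using c1 by simp
    ultimately have "c dvd k * k' - (k * k' - 1)" by (rule dvd_diff[rotated])
    then show "is_unit c" by simp
  qed
  define kn where "kn = nat (k mod Dz) + D"
  have kn0: "kn > 0" using D0 by (simp add: kn_def)
  have knint: "int kn = k mod Dz + Dz" using Dz0 DzD by (simp add: kn_def)
  have "coprime (int kn) (int D)"
  proof (rule coprimeI)
    fix c assume c1: "c dvd int kn" and c2: "c dvd int D"
    have "c dvd k mod Dz + Dz" using c1 knint by simp
    then have "c dvd k mod Dz" using c2 DzD by (metis dvd_add_left_iff)
    then have "c dvd k mod Dz + Dz * (k div Dz)" by (intro dvd_add) (simp_all add: DzD c2)
    then have "c dvd k" by (metis mod_mult_div_eq)
    then show "is_unit c" using c2 DzD copk by (metis coprime_common_divisor)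
  qed
  then have copn: "coprime kn D" by simp
  define \<xi> where "\<xi> = ee D 1"
  have xiD: "\<xi> ^ D = 1" unfolding \<xi>_def using ee_M[OF D0] by (simp add: ee_nat)
  define bn where "bn l = nat (b l mod Dz)" for l
  have bnint: "int (bn l) = b l mod int D" for l using Dz0 DzD by (simp add: bn_def)
  have e1: "ee M (a l) = \<xi> ^ bn l" if l: "l \<in> L" for l
  proof -
    have "ee M (a l) = ee D (b l)" using ab[OF l] MDT ee_scale[OF D0 T0] by simp
    also have "\<dots> = ee D (b l mod int D)" using ee_mod[OF D0] by simp
    also have "\<dots> = \<xi> ^ bn l" unfolding \<xi>_def by (simp add: ee_nat flip: bnint)
    finally show ?thesis .
  qed
  have e2: "ee M (k * a l) = \<xi> ^ (kn * bn l)" if l: "l \<in> L" for l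
  proof -
    have "ee M (k * a l) = ee M (int T * (k * b l))" using ab[OF l] by (simp add: algebra_simps)
    also have "\<dots> = ee D (k * b l)" using MDT ee_scale[OF D0 T0] by simp
    also have "\<dots> = ee D (int kn * (b l mod int D))"
    proof (rule ee_cong[OF D0])
      have "int kn mod int D = k mod int D" using knint DzD by simp
      moreover have "(b l mod int D) mod int D = b l mod int D" by simp
      ultimately have "(int kn * (b l mod int D)) mod int D = (k * b l) mod int D"
        by (metis mod_mult_cong)
      then show "int D dvd k * b l - int kn * (b l mod int D)"
        by (metis mod_eq_dvd_iff)
    qed
    also have "\<dots> = ee D (int (kn * bn l))" by (simp add: bnint)
    also have "\<dots> = \<xi> ^ (kn * bn l)" unfolding \<xi>_def by (rule ee_nat)
    finally show ?thesis .
  qed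
  have "(\<Sum>l\<in>L. \<xi> ^ bn l) = 0" using s0 e1 by simp
  then have "(\<Sum>l\<in>L. \<xi> ^ (kn * bn l)) = 0"
    by (rule galois_sum[OF D0 copn kn0 xiD])
  then show ?thesis using e2 by simp
qed

context grpctx
begin

lemma gsub_grp: "gsub ns x y \<in> grp ns"
  unfolding gsub_def grp_def using pos by auto

lemma char_sum:
  assumes H: "is_subgroup ns H"
  shows "(\<Sum>h\<in>H. ee (expo ns) (R ns h l)) =
    (if (\<forall>h\<in>H. ee (expo ns) (R ns h l) = 1) then of_nat (card H) else 0)"
proof (cases "\<forall>h\<in>H. ee (expo ns) (R ns h l) = 1")
  case True
  then show ?thesis by simp
next
  case False
  then obtain h0 where h0: "h0 \<in> H" "ee (expo ns) (R ns h0 l) \<noteq> 1" by blast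
  have Hg: "H \<subseteq> grp ns" using H by (simp add: is_subgroup_def)
  have fH: "finite H" using Hg finite_grp by (rule finite_subset)
  define f where "f = gadd ns h0"
  have inj: "inj_on f H"
    unfolding f_def inj_on_def using gadd_inj h0(1) Hg by blast
  have img: "f ` H = H"
    using fH H h0(1) inj by (intro endo_inj_surj) (auto simp: f_def is_subgroup_def)
  have psi: "ee (expo ns) (R ns (f h) l) = ee (expo ns) (R ns h0 l) * ee (expo ns) (R ns h l)" for h
  proof -
    have "ee (expo ns) (R ns (f h) l) = ee (expo ns) (R ns h0 l + R ns h l)"
      unfolding f_def by (rule ee_cong[OF expo_pos R_gadd])
    then show ?thesis by (simp add: ee_add)
  qed
  have "(\<Sum>h\<in>H. ee (expo ns) (R ns h l)) = (\<Sum>h\<in>f ` H. ee (expo ns) (R ns h l))"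
    by (simp add: img)
  also have "\<dots> = (\<Sum>h\<in>H. ee (expo ns) (R ns (f h) l))"
    by (rule sum.reindex[OF inj, unfolded comp_def])
  also have "\<dots> = ee (expo ns) (R ns h0 l) * (\<Sum>h\<in>H. ee (expo ns) (R ns h l))"
    by (simp add: psi sum_distrib_left)
  finally have "(1 - ee (expo ns) (R ns h0 l)) * (\<Sum>h\<in>H. ee (expo ns) (R ns h l)) = 0"
    by (simp add: algebra_simps)
  then have "(\<Sum>h\<in>H. ee (expo ns) (R ns h l)) = 0" using h0(2) by simp
  then show ?thesis unfolding if_not_P[OF False] .
qed

end



theorem corollary3p2:
  fixes ns :: "nat list" and S H :: "int list set"
  assumes "\<forall>i<length ns. ns!i \<ge> 1"
    and "S \<subseteq> grp ns"
    and "spectral ns S"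
    and "is_subgroup ns H"
    and "\<forall>h\<in>H. h \<noteq> gzero ns \<longrightarrow> (\<exists>w\<in>diffset ns S. dir_equiv ns w h)"
  shows "card H dvd card S"
proof -
  interpret grpctx ns using assms(1) by unfold_locales
  define M where "M = expo ns"
  have M0: "M > 0" unfolding M_def by (rule expo_pos)
  obtain L where L: "L \<subseteq> grp ns" "card L = card S"
    and orth: "\<And>l l'. l \<in> L \<Longrightarrow> l' \<in> L \<Longrightarrow> l \<noteq> l' \<Longrightarrow> chi_set ns (gsub ns l l') S = 0"
    using assms(3) unfolding spectral_def by blast
  have Hg: "H \<subseteq> grp ns" using assms(4) by (simp add: is_subgroup_def)
  have fS: "finite S" using assms(2) finite_grp by (rule finite_subset)
  have fL: "finite L" using L(1) finite_grp by (rule finite_subset)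
  have fH: "finite H" using Hg finite_grp by (rule finite_subset)
  define e where "e l s = ee M (R ns l s)" for l s
  have ediff: "ee M (x - y) = ee M x * cnj (ee M y)" for x y
    by (simp add: ee_cnj flip: ee_add)
  have norm1: "e l s * cnj (e l s) = 1" for l s
    unfolding e_def ee_cnj by (simp flip: ee_add)
  have orth': "(\<Sum>s\<in>S. e l s * cnj (e l' s)) = 0" if "l \<in> L" "l' \<in> L" "l \<noteq> l'" for l l'
  proof -
    have "chi ns (gsub ns l l') s = e l s * cnj (e l' s)" for s
    proof -
      have "chi ns (gsub ns l l') s = ee M (R ns (gsub ns l l') s)"
        unfolding chi_R M_def by (simp add: R_sym)
      also have "\<dots> = ee M (R ns l s - R ns l' s)"
        using R_gsub M0 unfolding M_def by (intro ee_cong) auto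
      finally show ?thesis unfolding e_def ediff .
    qed
    then show ?thesis using orth[OF that] unfolding chi_set_def by simp
  qed
  have symm: "(\<Sum>l\<in>L. e l s * cnj (e l s')) = 0" if "s \<in> S" "s' \<in> S" "s \<noteq> s'" for s s'
    by (rule sym_orth[OF fL fS L(2) norm1 orth' that])
  have step3: "(\<Sum>l\<in>L. ee M (R ns (gsub ns s s') l)) = 0" if "s \<in> S" "s' \<in> S" "s \<noteq> s'" for s s'
  proof -
    have "ee M (R ns (gsub ns s s') l) = e l s * cnj (e l s')" for l
    proof -
      have "ee M (R ns (gsub ns s s') l) = ee M (R ns s l - R ns s' l)"
        using R_gsub M0 unfolding M_def by (intro ee_cong) auto
      then show ?thesis unfolding e_def ediff by (simp add: R_sym)
    qed
    then show ?thesis using symm[OF that] by simp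
  qed
  have step4: "(\<Sum>l\<in>L. ee M (R ns h l)) = 0" if h: "h \<in> H" "h \<noteq> gzero ns" for h
  proof -
    obtain w where w: "w \<in> diffset ns S" "cyc ns w = cyc ns h"
      using assms(5) h unfolding dir_equiv_def by blast
    then obtain s s' where ss: "s \<in> S" "s' \<in> S" "w = gsub ns s s'"
      unfolding diffset_def by blast
    have hg: "h \<in> grp ns" using h Hg by blast
    have wg: "w \<in> grp ns" using ss gsub_grp by simp
    have "h \<in> cyc ns h" unfolding cyc_def using gsmul_1[OF hg] by (metis (mono_tags, lifting) mem_Collect_eq)
    then have hw: "h \<in> cyc ns w" using w by simp
    then obtain k where k: "h = gsmul ns k w" unfolding cyc_def by blast
    have "w \<in> cyc ns w" unfolding cyc_def using gsmul_1[OF wg] by (metis (mono_tags, lifting) mem_Collect_eq)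
    then have "w \<in> cyc ns h" using w by simp
    then obtain k' where k': "w = gsmul ns k' h" unfolding cyc_def by blast
    have sne: "s \<noteq> s'"
    proof
      assume "s = s'"
      then have "w = gzero ns" using ss gsub_self assms(2) by blast
      then have "h = gzero ns" using k gsmul_zero by simp
      then show False using h by simp
    qed
    define a where "a l = R ns w l" for l
    have s0: "(\<Sum>l\<in>L. ee M (a l)) = 0" unfolding a_def ss(3) by (rule step3[OF ss(1,2) sne])
    have per: "\<forall>l\<in>L. int M dvd (k * k' - 1) * a l"
    proof
      fix l
      have d1: "int M dvd R ns h l - k * a l" unfolding a_def k M_def by (rule R_gsmul)
      have d2: "int M dvd a l - k' * R ns h l" unfolding a_def M_def by (subst k', rule R_gsmul)
      have "(k * k' - 1) * a l = - ((a l - k' * R ns h l) + k' * (R ns h l - k * a l))"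
        by (simp add: algebra_simps)
      also have "int M dvd \<dots>"
      proof -
        have "int M dvd (a l - k' * R ns h l) + k' * (R ns h l - k * a l)"
          by (intro dvd_add d2 dvd_mult d1)
        then show ?thesis by (simp only: dvd_minus_iff)
      qed
      finally show "int M dvd (k * k' - 1) * a l" .
    qed
    have "(\<Sum>l\<in>L. ee M (k * a l)) = 0" by (rule galois_E[OF M0 fL s0 per])
    moreover have "ee M (R ns h l) = ee M (k * a l)" for l
      using M0 R_gsmul unfolding a_def k M_def by (intro ee_cong) auto
    ultimately show ?thesis by simp
  qed
  define P where "P l = (\<forall>h\<in>H. ee M (R ns h l) = 1)" for l
  have z: "gzero ns \<in> H" using assms(4) by (simp add: is_subgroup_def)
  have "(\<Sum>h\<in>H. \<Sum>l\<in>L. ee M (R ns h l)) = (\<Sum>l\<in>L. ee M (R ns (gzero ns) l)) + (\<Sum>h\<in>H - {gzero ns}. \<Sum>l\<in>L. ee M (R ns h l))"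
    using fH z by (simp add: sum.remove)
  also have "(\<Sum>h\<in>H - {gzero ns}. \<Sum>l\<in>L. ee M (R ns h l)) = 0"
    using step4 by (intro sum.neutral) auto
  finally have A: "(\<Sum>h\<in>H. \<Sum>l\<in>L. ee M (R ns h l)) = of_nat (card L)" by simp
  have "(\<Sum>h\<in>H. \<Sum>l\<in>L. ee M (R ns h l)) = (\<Sum>l\<in>L. \<Sum>h\<in>H. ee M (R ns h l))"
    by (rule sum.swap)
  also have "\<dots> = (\<Sum>l\<in>L. if P l then of_nat (card H) else 0)"
    unfolding P_def M_def using char_sum[OF assms(4)] by simp
  also have "\<dots> = of_nat (\<Sum>l\<in>L. if P l then card H else 0)"
    by (simp only: of_nat_sum) (intro sum.cong refl, simp)
  also have "(\<Sum>l\<in>L. if P l then card H else 0) = card H * card {l\<in>L. P l}"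
    using sum.inter_filter[OF fL, of "\<lambda>_. card H" P] by (simp add: mult.commute)
  finally have "of_nat (card L) = (of_nat (card H * card {l\<in>L. P l}) :: complex)"
    using A by simp
  then have "card L = card H * card {l\<in>L. P l}" by (simp only: of_nat_eq_iff)
  then show ?thesis using L(2) by simp
qed

end
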